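(* Let $\mathcal R_1,\mathcal R_2\subseteq\mathbb{N}_0^n\times\mathbb{N}_0^n$ be reaction networks on the same set of $n$ species. If $\mathrm{cl}(\mathcal R_1)=\mathrm{cl}(\mathcal R_2)$, then $\mathcal R_1(x)=\mathcal R_2(x)$ for all $x\in\mathbb{N}_0^n$.
   Context: A reaction network (RN) is a (possibly infinite) subset $\mathcal R\subseteq\mathbb{N}_0^n\times\mathbb{N}_0^n$ containing no element $(y,y')$ with $y=y'$; elements $(y,y')$ are reactions $y\to y'$. For $r_1=(y_1,y_1'),\ r_2=(y_2,y_2')$ define $r_1\oplus r_2=(y_1+0\vee(y_2-y_1'),\ y_2'+0\vee(y_1'-y_2))$ ($\vee$ componentwise maximum); it is associative. For $A\subseteq\mathbb{N}_0^n\times\mathbb{N}_0^n$, $\mathrm{cl}(A)$ is the set of all finite $\oplus$-sums of elements of $A$, including the empty sum $(0,0)$. An ordered sequence of reactions $y_1\to y_1',\dots,y_m\to y_m'$ is active on $x\in\mathbb{N}_0^n$ if $x+\sum_{i=1}^{k-1}(y_i'-y_i)\ge y_k$ (componentwise) for all $k$. A state $x$ leads to $x'$ via $\mathcal R$ if there is an ordered sequence of $m\ge0$ reactions of $\mathcal R$ (repetitions allowed) active on $x$ with $x'=x+\sum_{i=1}^m(y_i'-y_i)$. $\mathcal R(x)$ denotes the set of states $x'$ to which $x$ leads via $\mathcal R$. *)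

theory Defs
  imports "HOL-Analysis.Analysis"
begin

text \<open>Complexes/states are vectors in N_0^n, modelled as nat ^ 'n (n = CARD('n)).
  A reaction is a pair (y, y'). Reaction networks exclude y = y'.\<close>

type_synonym 'n cplx = "nat ^ 'n"
type_synonym 'n reaction = "'n cplx \<times> ('n::finite) cplx"

definition reaction_network :: "('n::finite) reaction set \<Rightarrow> bool" where
  "reaction_network R \<longleftrightarrow> (\<forall>(y, y') \<in> R. y \<noteq> y')"

definition pos_diff :: "('n::finite) cplx \<Rightarrow> ('n::finite) cplx \<Rightarrow> ('n::finite) cplx" where
  "pos_diff a b = (\<chi> i. nat (max 0 (int (a $ i) - int (b $ i))))"

definition oplus :: "('n::finite) reaction \<Rightarrow> ('n::finite) reaction \<Rightarrow> ('n::finite) reaction" (infixl "\<oplus>\<^sub>r" 65) where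
  "oplus r1 r2 = (fst r1 + pos_diff (fst r2) (snd r1), snd r2 + pos_diff (snd r1) (fst r2))"

text \<open>Finite oplus-sums of a list of reactions (oplus is associative and (0,0) is a unit); the empty sum is (0,0).\<close>
fun oplus_list :: "('n::finite) reaction list \<Rightarrow> ('n::finite) reaction" where
  "oplus_list [] = (0, 0)"
| "oplus_list (r # rs) = r \<oplus>\<^sub>r oplus_list rs"

definition cl :: "('n::finite) reaction set \<Rightarrow> ('n::finite) reaction set" where
  "cl A = {oplus_list rs | rs. set rs \<subseteq> A}"

definition shift :: "('n::finite) cplx \<Rightarrow> ('n::finite) reaction list \<Rightarrow> int ^ 'n" where
  "shift x rs = (\<chi> i. int (x $ i) + (\<Sum>r\<leftarrow>rs. int (snd r $ i) - int (fst r $ i)))"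

definition active :: "('n::finite) reaction list \<Rightarrow> ('n::finite) cplx \<Rightarrow> bool" where
  "active rs x \<longleftrightarrow> (\<forall>k < length rs. \<forall>i. shift x (take k rs) $ i \<ge> int (fst (rs ! k) $ i))"

definition leads_to :: "('n::finite) reaction set \<Rightarrow> ('n::finite) cplx \<Rightarrow> ('n::finite) cplx \<Rightarrow> bool" where
  "leads_to R x x' \<longleftrightarrow> (\<exists>rs. set rs \<subseteq> R \<and> active rs x \<and> (\<forall>i. int (x' $ i) = shift x rs $ i))"

definition reach :: "('n::finite) reaction set \<Rightarrow> ('n::finite) cplx \<Rightarrow> ('n::finite) cplx set" where
  "reach R x = {x'. leads_to R x x'}"

end

theory Submission
  imports Defs
begin

lemma pos_diff_nth[simp]: "pos_diff a b $ i = a $ i - b $ i"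
  unfolding pos_diff_def by auto

lemma shift_Nil[simp]: "shift x [] $ i = int (x $ i)"
  unfolding shift_def by simp

lemma shift_cons:
  assumes "\<forall>i. fst r $ i \<le> x $ i"
  shows "shift x (r # rs) = shift (\<chi> i. x $ i + snd r $ i - fst r $ i) rs"
proof -
  have "\<And>i. int (x $ i + snd r $ i - fst r $ i) = int (x $ i) + (int (snd r $ i) - int (fst r $ i))"
    proof -
    fix i have "fst r $ i \<le> x $ i" using assms by blast
    then show "int (x $ i + snd r $ i - fst r $ i) = int (x $ i) + (int (snd r $ i) - int (fst r $ i))" by linarith
  qed
  then show ?thesis unfolding shift_def by (auto simp: vec_eq_iff)
qed

lemma active_cons:
  "active (r # rs) x \<longleftrightarrow> (\<forall>i. fst r $ i \<le> x $ i) \<and> active rs (\<chi> i. x $ i + snd r $ i - fst r $ i)"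
proof
  assume a: "active (r # rs) x"
  have f: "\<forall>i. fst r $ i \<le> x $ i"
    using a[unfolded active_def, rule_format, of 0] by simp
  moreover have "active rs (\<chi> i. x $ i + snd r $ i - fst r $ i)"
    unfolding active_def
  proof (intro allI impI)
    fix k i assume "k < length rs"
    then have "int (fst ((r#rs) ! Suc k) $ i) \<le> shift x (take (Suc k) (r#rs)) $ i"
      using a unfolding active_def by auto
    then show "int (fst (rs ! k) $ i) \<le> shift (\<chi> i. x $ i + snd r $ i - fst r $ i) (take k rs) $ i"
      using shift_cons[OF f, of "take k rs"] by simp
  qed
  ultimately show "(\<forall>i. fst r $ i \<le> x $ i) \<and> active rs (\<chi> i. x $ i + snd r $ i - fst r $ i)" by blast
next
  assume b: "(\<forall>i. fst r $ i \<le> x $ i) \<and> active rs (\<chi> i. x $ i + snd r $ i - fst r $ i)"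
  show "active (r # rs) x"
    unfolding active_def
  proof (intro allI impI)
    fix k i assume k: "k < length (r # rs)"
    show "int (fst ((r # rs) ! k) $ i) \<le> shift x (take k (r # rs)) $ i"
    proof (cases k)
      case 0 then show ?thesis using b by simp
    next
      case (Suc m)
      then have "m < length rs" using k by simp
      then have "int (fst (rs ! m) $ i) \<le> shift (\<chi> i. x $ i + snd r $ i - fst r $ i) (take m rs) $ i"
        using b unfolding active_def by blast
      then show ?thesis using Suc shift_cons[of r x "take m rs"] b by simp
    qed
  qed
qed

lemma active_append:
  assumes "active rs x" "\<forall>i. int (y $ i) = shift x rs $ i" "active ss y"
  shows "active (rs @ ss) x \<and> shift x (rs @ ss) = shift y ss"
  using assms
proof (induction rs arbitrary: x)
  case Nil
  then have "y = x" by (simp add: vec_eq_iff)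
  then show ?case using Nil by simp
next
  case (Cons r rs)
  let ?x1 = "\<chi> i. x $ i + snd r $ i - fst r $ i"
  have f: "\<forall>i. fst r $ i \<le> x $ i" and a1: "active rs ?x1"
    using Cons.prems(1) active_cons by blast+
  have "\<forall>i. int (y $ i) = shift ?x1 rs $ i" using Cons.prems(2) shift_cons[OF f] by simp
  from Cons.IH[OF a1 this Cons.prems(3)]
  show ?case using f active_cons[of r "rs @ ss" x] shift_cons[OF f, of "rs @ ss"] by simp
qed

lemma oplus_list_active:
  assumes "oplus_list ts = c" "\<forall>i. fst c $ i \<le> x $ i"
  shows "active ts x \<and> (\<forall>i. shift x ts $ i = int (x $ i) + int (snd c $ i) - int (fst c $ i))"
  using assms
proof (induction ts arbitrary: x c)
  case Nil
  then show ?case by (auto simp: active_def)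
next
  case (Cons r ts)
  obtain a2 b2 where c2: "oplus_list ts = (a2, b2)" by (cases "oplus_list ts")
  have c: "c = r \<oplus>\<^sub>r (a2, b2)" using Cons.prems(1) c2 by simp
  have fc: "\<And>i. fst c $ i = fst r $ i + (a2 $ i - snd r $ i)"
    and sc: "\<And>i. snd c $ i = b2 $ i + (snd r $ i - a2 $ i)"
    using c by (auto simp: oplus_def)
  let ?x1 = "\<chi> i. x $ i + snd r $ i - fst r $ i"
  have f: "\<forall>i. fst r $ i \<le> x $ i" using Cons.prems(2) fc by (metis le_add1 le_trans)
  have "\<forall>i. fst (a2, b2) $ i \<le> ?x1 $ i"
  proof
    fix i show "fst (a2, b2) $ i \<le> ?x1 $ i"
      using Cons.prems(2)[rule_format, of i] fc[of i] by simp
  qed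
  from Cons.IH[OF c2 this]
  have ih: "active ts ?x1" "\<forall>i. shift ?x1 ts $ i = int (?x1 $ i) + int (b2 $ i) - int (a2 $ i)"
    by auto
  have "active (r # ts) x" using active_cons f ih(1) by blast
  moreover have "\<forall>i. shift x (r # ts) $ i = int (x $ i) + int (snd c $ i) - int (fst c $ i)"
  proof
    fix i
    have "shift x (r # ts) $ i = shift ?x1 ts $ i" using shift_cons[OF f] by simp
    also have "\<dots> = int (x $ i) + int (snd c $ i) - int (fst c $ i)"
      using ih(2)[rule_format, of i] fc[of i] sc[of i] f[rule_format, of i]
      by (simp add: of_nat_diff)
    finally show "shift x (r # ts) $ i = int (x $ i) + int (snd c $ i) - int (fst c $ i)" .
  qed
  ultimately show ?case by blast
qed

lemma cl_reduce:
  assumes "set cs \<subseteq> cl R" "active cs x"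
  shows "\<exists>us. set us \<subseteq> R \<and> active us x \<and> shift x us = shift x cs"
  using assms
proof (induction cs arbitrary: x)
  case Nil
  then show ?case by (intro exI[of _ "[]"]) simp
next
  case (Cons c cs)
  let ?x1 = "\<chi> i. x $ i + snd c $ i - fst c $ i"
  have f: "\<forall>i. fst c $ i \<le> x $ i" and a1: "active cs ?x1"
    using Cons.prems(2) active_cons by blast+
  obtain ts where ts: "set ts \<subseteq> R" "c = oplus_list ts"
    using Cons.prems(1) unfolding cl_def by auto
  from oplus_list_active[OF ts(2)[symmetric] f]
  have at: "active ts x" "\<forall>i. shift x ts $ i = int (x $ i) + int (snd c $ i) - int (fst c $ i)"
    by auto
  have y: "\<forall>i. int (?x1 $ i) = shift x ts $ i" proof
    fix i have "fst c $ i \<le> x $ i" using f by blast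
    then have "int (x $ i + snd c $ i - fst c $ i) = int (x $ i) + int (snd c $ i) - int (fst c $ i)" by linarith
    then show "int (?x1 $ i) = shift x ts $ i" using at(2) by simp
  qed
  obtain us where us: "set us \<subseteq> R" "active us ?x1" "shift ?x1 us = shift ?x1 cs"
    using Cons.IH[OF _ a1] Cons.prems(1) by auto
  from active_append[OF at(1) y us(2)]
  show ?case using ts(1) us shift_cons[OF f, of cs]
    by (intro exI[of _ "ts @ us"]) auto
qed

lemma subset_cl: "R \<subseteq> cl R"
proof
  fix r assume "r \<in> R"
  then have "oplus_list [r] = r \<and> set [r] \<subseteq> R"
    by (cases r) (simp add: oplus_def pos_diff_def vec_eq_iff)
  then show "r \<in> cl R" unfolding cl_def by (metis (mono_tags, lifting) mem_Collect_eq)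
qed

lemma reach_cl: "reach (cl R) x = reach R x"
proof
  show "reach (cl R) x \<subseteq> reach R x"
  proof
    fix y assume "y \<in> reach (cl R) x"
    then obtain cs where "set cs \<subseteq> cl R" "active cs x" "\<forall>i. int (y $ i) = shift x cs $ i"
      unfolding reach_def leads_to_def by auto
    then show "y \<in> reach R x" using cl_reduce[of cs R x]
      unfolding reach_def leads_to_def by auto
  qed
next
  show "reach R x \<subseteq> reach (cl R) x"
    unfolding reach_def leads_to_def using subset_cl by blast
qed

theorem corollary3p4:
  fixes R1 R2 :: "'n::finite reaction set"
  assumes "reaction_network R1" and "reaction_network R2"
    and "cl R1 = cl R2"
  shows "\<forall>x. reach R1 x = reach R2 x"
  using reach_cl assms(3) by metis

end
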